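(* Let $A\in\mathbb{C}^{n\times n}$ of rank $r>0$ and index $k$ be written in the Hartwig–Spindelböck decomposition $A=U\begin{bmatrix}\Sigma K&\Sigma L\\0&0\end{bmatrix}U^*$ (as in the context). Then: (a) if $m=1$, then $A^{\#_m}=A^{\mathrm{WC}}=U\begin{bmatrix}(\Sigma K)^{\mathrm{WG}}&0\\0&0\end{bmatrix}U^*$; (b) if $m\ge k$ (with $m\in\mathbb{N}=\{1,2,\dots\}$), then $A^{\#_m}=A^{\mathrm{cEP}}=U\begin{bmatrix}(\Sigma K)^{\mathrm{cEP}}&0\\0&0\end{bmatrix}U^*$.
   Context: Hartwig–Spindelböck decomposition: any $A\in\mathbb{C}^{n\times n}$ of rank $r>0$ can be written as $A=U\begin{bmatrix}\Sigma K&\Sigma L\\0&0\end{bmatrix}U^*$ with $U$ unitary, $\Sigma=\mathrm{diag}(\sigma_1I_{r_1},\dots,\sigma_sI_{r_s})$, $\sigma_1>\dots>\sigma_s>0$ the singular values of $A$, $r_1+\dots+r_s=r$, and $K\in\mathbb{C}^{r\times r}$, $L\in\mathbb{C}^{r\times(n-r)}$ with $KK^*+LL^*=I_r$. For a square matrix $B$: $B^\dagger$ Moore–Penrose inverse, $P_B=BB^\dagger$, $B^0=I$, $\mathcal{R}(\cdot)$ column space; $\mathrm{Ind}(B)$ is the smallest nonnegative integer $k$ with $\mathcal{R}(B^k)=\mathcal{R}(B^{k+1})$. The core-EP inverse $B^{\mathrm{cEP}}$ is the unique $X$ with $XBX=X$ and $\mathcal{R}(X)=\mathcal{R}(X^*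 )=\mathcal{R}(B^k)$, $k=\mathrm{Ind}(B)$. The WG inverse is $B^{\mathrm{WG}}:=(B^{\mathrm{cEP}})^2B$ and the WC inverse is $B^{\mathrm{WC}}:=B^{\mathrm{WG}}P_B$. For $m\in\mathbb{N}$, the $m$-weak group inverse is $B^{\mathrm{WG}_m}:=(B^{\mathrm{cEP}})^{m+1}B^m$ and the $m$-weak core inverse is $B^{\#_m}:=B^{\mathrm{WG}_m}P_{B^m}$. *)

theory Defs
  imports "Jordan_Normal_Form.Schur_Decomposition" "Jordan_Normal_Form.DL_Rank"
begin

definition col_sp :: "'a::semiring_0 mat \<Rightarrow> 'a vec set" where
  "col_sp B = {B *\<^sub>v x | x. x \<in> carrier_vec (dim_col B)}"

definition MP_inv :: "complex mat \<Rightarrow> complex mat" where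
  "MP_inv B = (THE X. X \<in> carrier_mat (dim_col B) (dim_row B) \<and>
      B * X * B = B \<and> X * B * X = X \<and>
      mat_adjoint (B * X) = B * X \<and> mat_adjoint (X * B) = X * B)"

definition proj_mat :: "complex mat \<Rightarrow> complex mat" where
  "proj_mat B = B * MP_inv B"

definition mat_index :: "complex mat \<Rightarrow> nat" where
  "mat_index B = (LEAST k. col_sp (B ^\<^sub>m k) = col_sp (B ^\<^sub>m (k + 1)))"

definition core_EP :: "complex mat \<Rightarrow> complex mat" where
  "core_EP B = (THE X. X \<in> carrier_mat (dim_row B) (dim_row B) \<and> X * B * X = X \<and>
      col_sp X = col_sp (B ^\<^sub>m mat_index B) \<and>
      col_sp (mat_adjoint X) = col_sp (B ^\<^sub>m mat_index B))"

definition WG_inv :: "complex mat \<Rightarrow> complex mat" where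
  "WG_inv B = (core_EP B) ^\<^sub>m 2 * B"

definition WC_inv :: "complex mat \<Rightarrow> complex mat" where
  "WC_inv B = WG_inv B * proj_mat B"

definition m_WG_inv :: "nat \<Rightarrow> complex mat \<Rightarrow> complex mat" where
  "m_WG_inv m B = (core_EP B) ^\<^sub>m (m + 1) * B ^\<^sub>m m"

definition m_weak_core_inv :: "nat \<Rightarrow> complex mat \<Rightarrow> complex mat" where
  "m_weak_core_inv m B = m_WG_inv m B * proj_mat (B ^\<^sub>m m)"

end

theory Submission
  imports Defs "Jordan_Normal_Form.Jordan_Normal_Form_Existence"
begin

abbreviation adj :: "complex mat \<Rightarrow> complex mat" where "adj \<equiv> mat_adjoint"

lemma adj_dim[simp]: "dim_row (adj A) = dim_col A" "dim_col (adj A) = dim_row A"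
  unfolding mat_adjoint_def by auto

lemma adj_index[simp]: "i < dim_col A \<Longrightarrow> j < dim_row A \<Longrightarrow> adj A $$ (i,j) = cnj (A $$ (j,i))"
  unfolding mat_adjoint_def by (simp add: mat_of_rows_index)

lemma adj_carrier[simp]: "A \<in> carrier_mat m n \<Longrightarrow> adj A \<in> carrier_mat n m"
  unfolding carrier_mat_def by auto

lemma adj_adj[simp]: "adj (adj A) = A"
  by (rule eq_matI, auto)

lemma adj_mult: assumes "A \<in> carrier_mat m n" "B \<in> carrier_mat n p"
  shows "adj (A * B) = adj B * adj A"
proof (rule eq_matI)
  fix i j assume ij: "i < dim_row (adj B * adj A)" "j < dim_col (adj B * adj A)"
  have "adj (A * B) $$ (i,j) = cnj (\<Sum>l<n. A $$ (j,l) * B $$ (l,i))"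
    using assms ij by (simp add: scalar_prod_def row_def col_def atLeast0LessThan)
  also have "\<dots> = (\<Sum>l<n. cnj (B $$ (l,i)) * cnj (A $$ (j,l)))"
    by (simp add: mult.commute)
  also have "\<dots> = (adj B * adj A) $$ (i,j)"
    using assms ij by (simp add: scalar_prod_def row_def col_def atLeast0LessThan)
  finally show "adj (A * B) $$ (i,j) = (adj B * adj A) $$ (i,j)" .
qed (insert assms, auto)

lemma adj_one[simp]: "adj (1\<^sub>m n) = 1\<^sub>m n"
  by (rule eq_matI, auto)

lemma adj_zero[simp]: "adj (0\<^sub>m m n) = 0\<^sub>m n m"
  by (rule eq_matI, auto)

lemma adj_add: assumes "A \<in> carrier_mat m n" "B \<in> carrier_mat m n"
  shows "adj (A + B) = adj A + adj B"
  by (rule eq_matI, insert assms, auto)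

lemma adj_minus: assumes "A \<in> carrier_mat m n" "B \<in> carrier_mat m n"
  shows "adj (A - B) = adj A - adj B"
  by (rule eq_matI, insert assms, auto)

lemma adj_four_block: assumes "A \<in> carrier_mat m1 n1" "B \<in> carrier_mat m1 n2"
  "C \<in> carrier_mat m2 n1" "D \<in> carrier_mat m2 n2"
  shows "adj (four_block_mat A B C D) = four_block_mat (adj A) (adj C) (adj B) (adj D)"
  by (rule eq_matI, insert assms, auto)

lemma pow_mat_Suc_left: assumes "A \<in> carrier_mat n n" shows "A ^\<^sub>m Suc k = A * A ^\<^sub>m k"
proof (induct k)
  case 0 then show ?case using assms by simp
next
  case (Suc k)
  have "A ^\<^sub>m Suc (Suc k) = (A * A ^\<^sub>m k) * A" using Suc by simp
  also have "\<dots> = A * (A ^\<^sub>m k * A)" using assms by (simp add: assoc_mult_mat[of _ n n _ n _ n] del: pow_mat.simps)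
  finally show ?case by simp
qed

lemma pow_mat_add: assumes "A \<in> carrier_mat n n" shows "A ^\<^sub>m (a + b) = A ^\<^sub>m a * A ^\<^sub>m b"
proof (induct b)
  case 0 then show ?case using assms by simp
next
  case (Suc b)
  have "A ^\<^sub>m (a + Suc b) = (A ^\<^sub>m a * A ^\<^sub>m b) * A" using Suc by simp
  also have "\<dots> = A ^\<^sub>m a * (A ^\<^sub>m b * A)" using assms by (simp add: assoc_mult_mat[of _ n n _ n _ n] del: pow_mat.simps)
  finally show ?case by simp
qed

lemma adj_pow: assumes "A \<in> carrier_mat n n" shows "adj (A ^\<^sub>m k) = (adj A) ^\<^sub>m k"
proof (induct k)
  case 0 then show ?case using assms by simp
next
  case (Suc k)
  have "adj (A ^\<^sub>m Suc k) = adj A * adj (A ^\<^sub>m k)"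
    using assms by (simp add: adj_mult[of _ n n _ n])
  also have "\<dots> = adj A * (adj A) ^\<^sub>m k" using Suc by simp
  also have "\<dots> = (adj A) ^\<^sub>m Suc k" using pow_mat_Suc_left[of "adj A" n k] assms by simp
  finally show ?case .
qed

lemma adj_mult_self_zero: assumes "B \<in> carrier_mat m n" "adj B * B = 0\<^sub>m n n"
  shows "B = 0\<^sub>m m n"
proof (rule eq_matI)
  fix i j assume i: "i < dim_row (0\<^sub>m m n)" and j: "j < dim_col (0\<^sub>m m n)"
  have "(adj B * B) $$ (j,j) = 0" using assms(2) i j by simp
  hence "(\<Sum>l<m. cnj (B $$ (l,j)) * B $$ (l,j)) = 0"
    using assms(1) i j by (simp add: scalar_prod_def row_def col_def atLeast0LessThan)
  moreover have "\<And>x. cnj x * x = complex_of_real ((cmod x)^2)"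
    by (metis complex_norm_square mult.commute of_real_power)
  ultimately have "(\<Sum>l<m. complex_of_real ((cmod (B $$ (l,j)))^2)) = 0"
    by simp
  hence "(\<Sum>l<m. (cmod (B $$ (l,j)))^2) = 0"
    by (metis of_real_eq_0_iff of_real_sum)
  hence "\<forall>l\<in>{..<m}. (cmod (B $$ (l,j)))^2 = 0"
    by (subst sum_nonneg_eq_0_iff[symmetric], auto)
  thus "B $$ (i,j) = 0\<^sub>m m n $$ (i,j)" using i j by auto
qed (insert assms, auto)

definition stab :: "complex mat \<Rightarrow> nat \<Rightarrow> bool" where
  "stab A n = (\<exists>N Y. Y \<in> carrier_mat n n \<and> A ^\<^sub>m N = A ^\<^sub>m Suc N * Y)"

lemma det_inv_exists: assumes A: "(A::complex mat) \<in> carrier_mat n n" and d: "det A \<noteq> 0"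
  shows "\<exists>B \<in> carrier_mat n n. A * B = 1\<^sub>m n"
  using det_non_zero_imp_unit[OF A d, of undefined] unfolding Units_def ring_mat_def by auto

lemma stab_jordan_block: "stab (jordan_block n (a::complex)) n"
proof (cases "a = 0")
  case True
  have "jordan_block n a ^\<^sub>m n = 0\<^sub>m n n"
    unfolding True jordan_block_zero_pow by (rule eq_matI, auto)
  moreover have "jordan_block n a ^\<^sub>m Suc n * 0\<^sub>m n n = 0\<^sub>m n n" by simp
  ultimately show ?thesis unfolding stab_def by (metis zero_carrier_mat)
next
  case False
  have ut: "upper_triangular (jordan_block n a)"
    by (rule upper_triangularI, auto simp: jordan_block_def)
  have "det (jordan_block n a) = prod_list (diag_mat (jordan_block n a))"
    by (rule det_upper_triangular[OF ut jordan_block_carrier])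
  also have "\<dots> = a ^ n" using diag_jordan_block_pow[of n a 1] by simp
  finally have "det (jordan_block n a) \<noteq> 0" using False by simp
  from det_inv_exists[OF jordan_block_carrier this] obtain B where B: "B \<in> carrier_mat n n"
    "jordan_block n a * B = 1\<^sub>m n" by auto
  have "jordan_block n a ^\<^sub>m 0 = jordan_block n a ^\<^sub>m Suc 0 * B"
    using B by simp
  thus ?thesis unfolding stab_def using B(1) by blast
qed

lemma stab_extend: assumes A: "A \<in> carrier_mat n n" and Y: "Y \<in> carrier_mat n n"
  and e: "A ^\<^sub>m N = A ^\<^sub>m Suc N * Y"
  shows "A ^\<^sub>m (N + d) = A ^\<^sub>m Suc (N + d) * Y"
proof (induct d)
  case 0 then show ?case using e by simp
next
  case (Suc d)
  have "A ^\<^sub>m (N + Suc d) = A * A ^\<^sub>m (N + d)" using pow_mat_Suc_left[OF A] by simp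
  also have "\<dots> = A * (A ^\<^sub>m Suc (N + d) * Y)" using Suc by simp
  also have "\<dots> = (A * A ^\<^sub>m Suc (N + d)) * Y"
    using A Y by (simp add: assoc_mult_mat[of _ n n _ n _ n] del: pow_mat.simps)
  also have "A * A ^\<^sub>m Suc (N + d) = A ^\<^sub>m Suc (N + Suc d)"
    using pow_mat_Suc_left[OF A, of "Suc (N+d)"] by simp
  finally show ?case .
qed

lemma four_block_diag_mult: assumes "A1 \<in> carrier_mat n1 n1" "A2 \<in> carrier_mat n1 n1"
  "B1 \<in> carrier_mat n2 n2" "B2 \<in> carrier_mat n2 n2"
  shows "four_block_mat A1 (0\<^sub>m n1 n2) (0\<^sub>m n2 n1) B1 * four_block_mat A2 (0\<^sub>m n1 n2) (0\<^sub>m n2 n1) B2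
    = four_block_mat (A1 * A2) (0\<^sub>m n1 n2) (0\<^sub>m n2 n1) (B1 * B2)"
proof -
  have "four_block_mat A1 (0\<^sub>m n1 n2) (0\<^sub>m n2 n1) B1 * four_block_mat A2 (0\<^sub>m n1 n2) (0\<^sub>m n2 n1) B2
   = four_block_mat (A1 * A2 + 0\<^sub>m n1 n2 * 0\<^sub>m n2 n1) (A1 * 0\<^sub>m n1 n2 + 0\<^sub>m n1 n2 * B2)
    (0\<^sub>m n2 n1 * A2 + B1 * 0\<^sub>m n2 n1) (0\<^sub>m n2 n1 * 0\<^sub>m n1 n2 + B1 * B2)"
    by (rule mult_four_block_mat[OF assms(1) zero_carrier_mat zero_carrier_mat assms(3)
         assms(2) zero_carrier_mat zero_carrier_mat assms(4)])
  also have "\<dots> = four_block_mat (A1 * A2) (0\<^sub>m n1 n2) (0\<^sub>m n2 n1) (B1 * B2)"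
    using assms by simp
  finally show ?thesis .
qed

lemma stab_block: assumes A: "A \<in> carrier_mat n1 n1" and B: "B \<in> carrier_mat n2 n2"
  and sA: "stab A n1" and sB: "stab B n2"
  shows "stab (four_block_mat A (0\<^sub>m n1 n2) (0\<^sub>m n2 n1) B) (n1 + n2)"
proof -
  obtain N1 Y1 where Y1: "Y1 \<in> carrier_mat n1 n1" "A ^\<^sub>m N1 = A ^\<^sub>m Suc N1 * Y1"
    using sA unfolding stab_def by auto
  obtain N2 Y2 where Y2: "Y2 \<in> carrier_mat n2 n2" "B ^\<^sub>m N2 = B ^\<^sub>m Suc N2 * Y2"
    using sB unfolding stab_def by auto
  define N where "N = max N1 N2"
  have e1: "A ^\<^sub>m N = A ^\<^sub>m Suc N * Y1"
    using stab_extend[OF A Y1, of "N - N1"] unfolding N_def by simp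
  have e2: "B ^\<^sub>m N = B ^\<^sub>m Suc N * Y2"
    using stab_extend[OF B Y2, of "N - N2"] unfolding N_def by simp
  let ?Y = "four_block_mat Y1 (0\<^sub>m n1 n2) (0\<^sub>m n2 n1) Y2"
  have "four_block_mat A (0\<^sub>m n1 n2) (0\<^sub>m n2 n1) B ^\<^sub>m Suc N * ?Y =
    four_block_mat (A ^\<^sub>m Suc N) (0\<^sub>m n1 n2) (0\<^sub>m n2 n1) (B ^\<^sub>m Suc N) * ?Y"
    by (simp only: pow_four_block_mat[OF A B])
  also have "\<dots> = four_block_mat (A ^\<^sub>m Suc N * Y1) (0\<^sub>m n1 n2) (0\<^sub>m n2 n1) (B ^\<^sub>m Suc N * Y2)"
    by (rule four_block_diag_mult[OF pow_carrier_mat[OF A] Y1(1) pow_carrier_mat[OF B] Y2(1)])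
  also have "\<dots> = four_block_mat A (0\<^sub>m n1 n2) (0\<^sub>m n2 n1) B ^\<^sub>m N"
    unfolding e1[symmetric] e2[symmetric] pow_four_block_mat[OF A B] ..
  finally show ?thesis unfolding stab_def using Y1(1) Y2(1)
    by (intro exI[of _ N] exI[of _ ?Y], auto)
qed

lemma stab_jordan_matrix: "stab (jordan_matrix n_as) (sum_list (map fst n_as))"
proof (induct n_as)
  case Nil
  have "(jordan_matrix [] :: complex mat) ^\<^sub>m 0 = jordan_matrix [] ^\<^sub>m Suc 0 * 1\<^sub>m 0"
    by (rule eq_matI, auto)
  then show ?case unfolding stab_def by force
next
  case (Cons na n_as)
  obtain n a where na: "na = (n,a)" by force
  show ?case unfolding na jordan_matrix_Cons
    using stab_block[OF jordan_block_carrier jordan_matrix_carrier stab_jordan_block Cons]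
    by simp
qed

lemma stab_similar: assumes J: "J \<in> carrier_mat n n" and P: "P \<in> carrier_mat n n" and Q: "Q \<in> carrier_mat n n"
  and Y: "Y \<in> carrier_mat n n" and QP: "Q * P = 1\<^sub>m n"
  and pw: "\<And>k. A ^\<^sub>m k = P * J ^\<^sub>m k * Q"
  and e: "J ^\<^sub>m N = J ^\<^sub>m Suc N * Y"
  shows "A ^\<^sub>m N = A ^\<^sub>m Suc N * (P * Y * Q)"
proof -
  define JN where "JN = J ^\<^sub>m Suc N"
  have JN: "JN \<in> carrier_mat n n" unfolding JN_def by (rule pow_carrier_mat[OF J])
  have "A ^\<^sub>m N = P * (JN * Y) * Q" unfolding pw e JN_def ..
  also have "\<dots> = P * (JN * (Q * P) * Y) * Q"
    unfolding QP using JN by simp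
  also have "\<dots> = (P * JN * Q) * (P * Y * Q)"
    using JN P Q Y
    by (simp add: assoc_mult_mat[of _ n n _ n _ n] mult_carrier_mat[of _ n n _ n])
  also have "\<dots> = A ^\<^sub>m Suc N * (P * Y * Q)" unfolding pw JN_def ..
  finally show ?thesis .
qed

lemma stab_exists: assumes A: "(A :: complex mat) \<in> carrier_mat n n"
  shows "\<exists>N Y. Y \<in> carrier_mat n n \<and> A ^\<^sub>m N = A ^\<^sub>m Suc N * Y"
proof -
  from char_poly_factorized[OF A] obtain as where "char_poly A = (\<Prod>a\<leftarrow>as. [:- a, 1:])" by auto
  from jordan_nf_exists[OF A this] obtain n_as where "jordan_nf A n_as" ..
  then obtain P Q where w: "similar_mat_wit A (jordan_matrix n_as) P Q"
    unfolding jordan_nf_def similar_mat_def by auto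
  let ?J = "jordan_matrix n_as"
  from w A have J: "?J \<in> carrier_mat n n" and P: "P \<in> carrier_mat n n" and Q: "Q \<in> carrier_mat n n"
    and QP: "Q * P = 1\<^sub>m n"
    unfolding similar_mat_wit_def Let_def by auto
  have sn: "sum_list (map fst n_as) = n" by (metis J carrier_matD(1) jordan_matrix_dim(1))
  obtain N Y where Y: "Y \<in> carrier_mat n n" "?J ^\<^sub>m N = ?J ^\<^sub>m Suc N * Y"
    using stab_jordan_matrix[of n_as] unfolding stab_def sn by auto
  have pw: "\<And>k. A ^\<^sub>m k = P * ?J ^\<^sub>m k * Q" by (rule similar_mat_wit_pow_id[OF w])
  have "P * Y * Q \<in> carrier_mat n n" using P Q Y(1) by (meson mult_carrier_mat)
  with stab_similar[OF J P Q Y(1) QP pw Y(2)] show ?thesis by blast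
qed

declare pow_mat.simps(2)[simp del]

locale sqm = fixes n :: nat
begin

lemma mult_n[simp]: "A \<in> carrier_mat n n \<Longrightarrow> B \<in> carrier_mat n n \<Longrightarrow> A * B \<in> carrier_mat n n"
  by (rule mult_carrier_mat)

lemma assoc_n[simp]: "A \<in> carrier_mat n n \<Longrightarrow> B \<in> carrier_mat n n \<Longrightarrow> C \<in> carrier_mat n n
  \<Longrightarrow> A * B * C = A * (B * (C :: complex mat))"
  by (rule assoc_mult_mat)

lemma adj_mult_n[simp]: "A \<in> carrier_mat n n \<Longrightarrow> B \<in> carrier_mat n n \<Longrightarrow> adj (A * B) = adj B * adj A"
  by (rule adj_mult)

lemma dist_n: 
  "A \<in> carrier_mat n n \<Longrightarrow> B \<in> carrier_mat n n \<Longrightarrow> C \<in> carrier_mat n n \<Longrightarrow> A * (B + C) = A * B + A * (C :: complex mat)"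
  "A \<in> carrier_mat n n \<Longrightarrow> B \<in> carrier_mat n n \<Longrightarrow> C \<in> carrier_mat n n \<Longrightarrow> (B + C) * A = B * A + C * (A :: complex mat)"
  "A \<in> carrier_mat n n \<Longrightarrow> B \<in> carrier_mat n n \<Longrightarrow> C \<in> carrier_mat n n \<Longrightarrow> A * (B - C) = A * B - A * (C :: complex mat)"
  "A \<in> carrier_mat n n \<Longrightarrow> B \<in> carrier_mat n n \<Longrightarrow> C \<in> carrier_mat n n \<Longrightarrow> (B - C) * A = B * A - C * (A :: complex mat)"
  by (rule mult_add_distrib_mat add_mult_distrib_mat mult_minus_distrib_mat minus_mult_distrib_mat; assumption)+

lemma minus_n[simp]: "A \<in> carrier_mat n n \<Longrightarrow> B \<in> carrier_mat n n \<Longrightarrow> A - B \<in> carrier_mat n n"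
  by (rule minus_carrier_mat)

lemma adj_minus_n[simp]: "A \<in> carrier_mat n n \<Longrightarrow> B \<in> carrier_mat n n \<Longrightarrow> adj (A - B) = adj A - adj B"
  by (rule adj_minus)

lemma minus_zero_eq: "A \<in> carrier_mat n n \<Longrightarrow> B \<in> carrier_mat n n \<Longrightarrow> A - B = 0\<^sub>m n n \<Longrightarrow> A = (B :: complex mat)"
  by (rule eq_matI, auto, metis (no_types, lifting) carrier_matD index_minus_mat(1) index_zero_mat(1) right_minus_eq)

lemma zero_n[simp]: "A \<in> carrier_mat n n \<Longrightarrow> A * 0\<^sub>m n n = 0\<^sub>m n n" "A \<in> carrier_mat n n \<Longrightarrow> 0\<^sub>m n n * A = 0\<^sub>m n n"
  by (auto intro: right_mult_zero_mat left_mult_zero_mat)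

lemma self_minus[simp]: "A \<in> carrier_mat n n \<Longrightarrow> A - A = 0\<^sub>m n (n::nat)" for A :: "complex mat"
  by simp

lemma herm_pow: "H \<in> carrier_mat n n \<Longrightarrow> adj H = H \<Longrightarrow> adj (H ^\<^sub>m k) = H ^\<^sub>m k"
  using adj_pow by metis

lemma cancel_step: assumes H: "H \<in> carrier_mat n n" and h: "adj H = H" and E: "E \<in> carrier_mat n n"
  and z: "H ^\<^sub>m Suc (Suc i) * E = 0\<^sub>m n n"
  shows "H ^\<^sub>m Suc i * E = 0\<^sub>m n n"
proof -
  define W where "W = H ^\<^sub>m Suc i * E"
  have Hi: "H ^\<^sub>m k \<in> carrier_mat n n" for k using H by simp
  have W: "W \<in> carrier_mat n n" unfolding W_def using Hi E by simp
  have "adj W * W = adj E * (H ^\<^sub>m Suc i * H ^\<^sub>m Suc i) * E"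
    unfolding W_def using Hi E herm_pow[OF H h] by simp
  also have "H ^\<^sub>m Suc i * H ^\<^sub>m Suc i = H ^\<^sub>m i * H ^\<^sub>m Suc (Suc i)"
    using pow_mat_add[OF H, of "Suc i" "Suc i"] pow_mat_add[OF H, of i "Suc (Suc i)"] by simp
  also have "adj E * (H ^\<^sub>m i * H ^\<^sub>m Suc (Suc i)) * E = adj E * H ^\<^sub>m i * (H ^\<^sub>m Suc (Suc i) * E)"
    using Hi E by simp
  also have "\<dots> = 0\<^sub>m n n" unfolding z using Hi E by simp
  finally show ?thesis using adj_mult_self_zero[OF W] unfolding W_def by simp
qed

lemma herm_one_inverse: assumes H: "H \<in> carrier_mat n n" and h: "adj H = H"
  shows "\<exists>G \<in> carrier_mat n n. H * G * H = H"
proof -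
  obtain N Y where Y: "Y \<in> carrier_mat n n" and e: "H ^\<^sub>m N = H ^\<^sub>m Suc N * Y"
    using stab_exists[OF H] by auto
  define E where "E = 1\<^sub>m n - H * Y"
  have Hi: "H ^\<^sub>m k \<in> carrier_mat n n" for k using H by simp
  have E: "E \<in> carrier_mat n n" unfolding E_def using H Y by simp
  have "H ^\<^sub>m N * E = H ^\<^sub>m N - H ^\<^sub>m N * H * Y"
    unfolding E_def using dist_n(3)[of "H ^\<^sub>m N" "1\<^sub>m n" "H * Y"] H Y Hi by simp
  also have "H ^\<^sub>m N * H = H ^\<^sub>m Suc N" by (simp add: pow_mat.simps(2))
  also have "H ^\<^sub>m N - H ^\<^sub>m Suc N * Y = 0\<^sub>m n n" unfolding e[symmetric] using Hi by simp
  finally have z0: "H ^\<^sub>m N * E = 0\<^sub>m n n" .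
  have zS: "H ^\<^sub>m Suc N * E = 0\<^sub>m n n"
    using pow_mat_Suc_left[OF H, of N] z0 H Hi E by simp
  have "\<forall>i. H ^\<^sub>m Suc i * E = 0\<^sub>m n n \<longrightarrow> H ^\<^sub>m Suc 0 * E = 0\<^sub>m n n"
  proof
    fix i show "H ^\<^sub>m Suc i * E = 0\<^sub>m n n \<longrightarrow> H ^\<^sub>m Suc 0 * E = 0\<^sub>m n n"
      by (induct i, simp, insert cancel_step[OF H h E], blast)
  qed
  with zS have "H ^\<^sub>m Suc 0 * E = 0\<^sub>m n n" by blast
  hence HE: "H * E = 0\<^sub>m n n" using H by (simp add: pow_mat.simps(2))
  have HHY: "H * (H * Y) = H"
  proof (rule minus_zero_eq[symmetric])
    show "H - H * (H * Y) = 0\<^sub>m n n" using HE unfolding E_def using dist_n(3)[of H "1\<^sub>m n" "H * Y"] H Y by simp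
  qed (insert H Y, auto)
  define W where "W = H * Y * H - H"
  have W: "W \<in> carrier_mat n n" unfolding W_def using H Y by simp
  have "H * (H * (Y * H)) = (H * (H * Y)) * H" using H Y by simp
  hence HHYH: "H * (H * (Y * H)) = H * H" unfolding HHY .
  have HW: "H * W = 0\<^sub>m n n" unfolding W_def
    using dist_n(3)[of H "H * Y * H" H] H Y HHYH by simp
  have "adj W = H * adj Y * H - H" unfolding W_def using H Y h by simp
  hence "adj W * W = (H * adj Y * H - H) * W" by simp
  also have "\<dots> = H * adj Y * (H * W) - H * W"
    using dist_n(4)[of W "H * adj Y * H" H] H Y W by simp
  also have "\<dots> = 0\<^sub>m n n" unfolding HW using H Y by simp
  finally have "W = 0\<^sub>m n n" using adj_mult_self_zero[OF W] by simp
  hence "H * Y * H = H" using minus_zero_eq[of "H * Y * H" H] H Y unfolding W_def by simp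
  thus ?thesis using Y by blast
qed

end

context sqm begin

lemma L1: assumes C: "C \<in> carrier_mat n n" and G: "G \<in> carrier_mat n n"
  and hG: "(adj C * C) * G * (adj C * C) = adj C * C"
  shows "C * (G * (adj C * C)) = C" "adj (C * (G * adj C)) = C * (G * adj C)"
proof -
  have hG': "adj C * (C * (G * (adj C * C))) = adj C * C" using hG C G by simp
  define V where "V = C * (G * (adj C * C)) - C"
  have V: "V \<in> carrier_mat n n" unfolding V_def using C G by simp
  have CV: "adj C * V = 0\<^sub>m n n" unfolding V_def
    using dist_n(3)[of "adj C" "C * (G * (adj C * C))" C] C G hG' by simp
  have "adj V = adj C * (C * (adj G * adj C)) - adj C" unfolding V_def using C G by simp
  hence "adj V * V = (adj C * (C * (adj G * adj C)) - adj C) * V" by simp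
  also have "\<dots> = adj C * (C * (adj G * (adj C * V))) - adj C * V"
    using dist_n(4)[of V "adj C * (C * (adj G * adj C))" "adj C"] C G V by simp
  also have "\<dots> = 0\<^sub>m n n" unfolding CV using C G by simp
  finally have "V = 0\<^sub>m n n" using adj_mult_self_zero[OF V] by simp
  thus F: "C * (G * (adj C * C)) = C" using minus_zero_eq[of "C * (G * (adj C * C))" C] C G
    unfolding V_def by simp
  have R: "adj C * (C * (adj G * adj C)) = adj C"
    using arg_cong[OF F, of adj] C G by simp
  have "C * (G * adj C) = C * (G * (adj C * (C * (adj G * adj C))))" unfolding R ..
  also have "\<dots> = (C * (G * (adj C * C))) * (adj G * adj C)" using C G by simp
  also have "\<dots> = adj (C * (G * adj C))" unfolding F using C G by simp
  finally show "adj (C * (G * adj C)) = C * (G * adj C)" by simp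
qed

definition isMP :: "complex mat \<Rightarrow> complex mat \<Rightarrow> bool" where
  "isMP A X = (X \<in> carrier_mat n n \<and> A * X * A = A \<and> X * A * X = X \<and> adj (A * X) = A * X \<and> adj (X * A) = X * A)"

lemma MP_exists: assumes A: "A \<in> carrier_mat n n" shows "\<exists>X. isMP A X"
proof -
  have h1: "adj (adj A * A) = adj A * A" using A by simp
  obtain G1 where G1: "G1 \<in> carrier_mat n n" "(adj A * A) * G1 * (adj A * A) = adj A * A"
    using herm_one_inverse[of "adj A * A"] h1 A by auto
  have h2: "adj (A * adj A) = A * adj A" using A by simp
  obtain G2 where G2: "G2 \<in> carrier_mat n n" "(A * adj A) * G2 * (A * adj A) = A * adj A"
    using herm_one_inverse[of "A * adj A"] h2 A by auto
  have aA: "adj A \<in> carrier_mat n n" using A by simp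
  note L1a = L1[OF A G1(1) G1(2)]
  note L1b = L1[OF aA G2(1), unfolded adj_adj, OF G2(2)]
  have F1: "A * (G1 * (adj A * A)) = A" by (rule L1a(1))
  have Q1: "adj (A * (G1 * adj A)) = A * (G1 * adj A)" by (rule L1a(2))
  have F2: "adj A * (G2 * (A * adj A)) = adj A" by (rule L1b(1))
  have Q2: "adj (adj A * (G2 * A)) = adj A * (G2 * A)" by (rule L1b(2))
  have F2': "A * (adj A * (adj G2 * A)) = A" using arg_cong[OF F2, of adj] A G2(1) by simp
  have Q2': "adj A * (adj G2 * A) = adj A * (G2 * A)" using Q2 A G2(1) by simp
  have K1: "A * (adj A * (G2 * A)) = A" using F2' unfolding Q2' .
  define X where "X = adj A * (G2 * (A * (G1 * adj A)))"
  have X: "X \<in> carrier_mat n n" unfolding X_def using A G1 G2 by simp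
  have AX: "A * X = A * (G1 * adj A)"
  proof -
    have "A * X = (A * (adj A * (G2 * A))) * (G1 * adj A)" unfolding X_def using A G1 G2 by simp
    thus ?thesis unfolding K1 .
  qed
  have XA: "X * A = adj A * (G2 * A)"
  proof -
    have "X * A = adj A * (G2 * (A * (G1 * (adj A * A))))" unfolding X_def using A G1 G2 by simp
    thus ?thesis unfolding F1 .
  qed
  have "A * X * A = A * (G1 * (adj A * A))" unfolding AX using A G1 by simp
  hence AXA: "A * X * A = A" unfolding F1 .
  have "X * A * X = adj A * (G2 * A) * X" unfolding XA ..
  also have "\<dots> = adj A * (G2 * ((A * (adj A * (G2 * A))) * (G1 * adj A)))"
    unfolding X_def using A G1 G2 by simp
  finally have "X * A * X = adj A * (G2 * ((A * (adj A * (G2 * A))) * (G1 * adj A)))" .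
  hence XAX: "X * A * X = X" unfolding K1 X_def .
  show ?thesis unfolding isMP_def using X AXA XAX AX XA Q1 Q2 by (intro exI[of _ X], simp)
qed

lemma MP_unique: assumes A: "A \<in> carrier_mat n n" and 1: "isMP A X1" and 2: "isMP A X2"
  shows "X1 = X2"
proof -
  from 1 have X1: "X1 \<in> carrier_mat n n" and a1: "A * X1 * A = A" "X1 * A * X1 = X1"
    "adj (A * X1) = A * X1" "adj (X1 * A) = X1 * A" unfolding isMP_def by auto
  from 2 have X2: "X2 \<in> carrier_mat n n" and a2: "A * X2 * A = A" "X2 * A * X2 = X2"
    "adj (A * X2) = A * X2" "adj (X2 * A) = X2 * A" unfolding isMP_def by auto
  have e1: "X1 = X1 * A * X2"
  proof -
    have "X1 = X1 * adj (A * X1)" using a1 X1 A by simp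
    also have "\<dots> = X1 * adj X1 * adj (A * X2 * A)" using a2 X1 X2 A by simp
    also have "\<dots> = X1 * (adj (A * X1) * adj (A * X2))" using X1 X2 A by simp
    also have "\<dots> = (X1 * A * X1) * A * X2" unfolding a1(3) a2(3) using X1 X2 A by simp
    finally show ?thesis unfolding a1(2) .
  qed
  have e2: "X2 = X1 * A * X2"
  proof -
    have "X2 = adj (X2 * A) * X2" using a2 X2 A by simp
    also have "\<dots> = adj (A * X1 * A) * adj X2 * X2" using a1 X1 X2 A by simp
    also have "\<dots> = (adj (X1 * A) * adj (X2 * A)) * X2" using X1 X2 A by simp
    also have "\<dots> = X1 * A * (X2 * A * X2)" unfolding a1(4) a2(4) using X1 X2 A by simp
    finally show ?thesis unfolding a2(2) .
  qed
  show ?thesis using e1 e2 by simp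
qed

lemma MP_inv_props: assumes A: "A \<in> carrier_mat n n" shows "isMP A (MP_inv A)"
proof -
  obtain X where X: "isMP A X" using MP_exists[OF A] by auto
  have ex: "\<exists>!X. X \<in> carrier_mat (dim_col A) (dim_row A) \<and>
      A * X * A = A \<and> X * A * X = X \<and>
      mat_adjoint (A * X) = A * X \<and> mat_adjoint (X * A) = X * A"
  proof (rule ex1I[of _ X])
    show "X \<in> carrier_mat (dim_col A) (dim_row A) \<and> A * X * A = A \<and> X * A * X = X \<and>
      mat_adjoint (A * X) = A * X \<and> mat_adjoint (X * A) = X * A" using X A unfolding isMP_def by auto
  next
    fix Y assume "Y \<in> carrier_mat (dim_col A) (dim_row A) \<and> A * Y * A = A \<and> Y * A * Y = Y \<and>
      mat_adjoint (A * Y) = A * Y \<and> mat_adjoint (Y * A) = Y * A"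
    hence "isMP A Y" using A unfolding isMP_def by auto
    thus "Y = X" using MP_unique[OF A X] by simp
  qed
  show ?thesis using theI'[OF ex] A unfolding MP_inv_def isMP_def by auto
qed

end

context sqm begin

lemma cs_mult: assumes B: "B \<in> carrier_mat n n" and Z: "Z \<in> carrier_mat n n"
  shows "col_sp (B * Z) \<subseteq> col_sp (B :: complex mat)"
proof
  fix v assume "v \<in> col_sp (B * Z)"
  then obtain x where x: "x \<in> carrier_vec n" "v = (B * Z) *\<^sub>v x" unfolding col_sp_def using B Z by auto
  hence "v = B *\<^sub>v (Z *\<^sub>v x)" using B Z by simp
  moreover have "Z *\<^sub>v x \<in> carrier_vec (dim_col B)" using Z B x by simp
  ultimately show "v \<in> col_sp B" unfolding col_sp_def by blast
qed

lemma mult_unit_col: assumes C: "(C :: complex mat) \<in> carrier_mat n n" and j: "j < n" shows "C *\<^sub>v unit_vec n j = col C j"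
proof (rule eq_vecI)
  fix i assume "i < dim_vec (col C j)"
  hence i: "i < n" using C by simp
  have "row C i \<bullet> unit_vec n j = row C i $ j" by (rule scalar_prod_right_unit[OF j])
  thus "(C *\<^sub>v unit_vec n j) $ i = col C j $ i" using C i j by simp
qed (insert C, simp)

lemma cs_sub: assumes C: "C \<in> carrier_mat n n" and B: "B \<in> carrier_mat n n"
  and s: "col_sp C \<subseteq> col_sp (B :: complex mat)"
  shows "\<exists>Z \<in> carrier_mat n n. C = B * Z"
proof -
  have ex: "\<exists>x. j < n \<longrightarrow> x \<in> carrier_vec n \<and> col C j = B *\<^sub>v x" for j
  proof (cases "j < n")
    case True
    have "col C j \<in> col_sp C" unfolding col_sp_def using C True mult_unit_col[OF C True]
      by (auto intro!: exI[of _ "unit_vec n j"])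
    with s have "col C j \<in> col_sp B" by blast
    then show ?thesis unfolding col_sp_def using B by auto
  qed simp
  from ex have "\<forall>j. \<exists>x. j < n \<longrightarrow> x \<in> carrier_vec n \<and> col C j = B *\<^sub>v x" by blast
  from choice[OF this] obtain x where x0: "\<forall>j. j < n \<longrightarrow> x j \<in> carrier_vec n \<and> col C j = B *\<^sub>v x j"
    by blast
  hence x: "\<And>j. j < n \<Longrightarrow> x j \<in> carrier_vec n" "\<And>j. j < n \<Longrightarrow> col C j = B *\<^sub>v x j" by auto
  define Z where "Z = mat n n (\<lambda>(i,j). x j $ i)"
  have Z: "Z \<in> carrier_mat n n" unfolding Z_def by simp
  have colZ: "j < n \<Longrightarrow> col Z j = x j" for j
    unfolding Z_def using x[of j] by (intro eq_vecI, auto)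
  have "C = B * Z"
  proof (rule mat_col_eqI)
    fix j assume "j < dim_col (B * Z)"
    hence j: "j < n" using Z by simp
    show "col C j = col (B * Z) j" using col_mult2[OF B Z j] colZ[OF j] x(2)[OF j] by simp
  qed (insert C B Z, auto)
  thus ?thesis using Z by blast
qed

lemma cs_eq_iff: assumes C: "C \<in> carrier_mat n n" and B: "B \<in> carrier_mat n n"
  shows "col_sp C = col_sp (B :: complex mat) \<longleftrightarrow>
    (\<exists>Z \<in> carrier_mat n n. C = B * Z) \<and> (\<exists>Z \<in> carrier_mat n n. B = C * Z)"
proof
  assume "col_sp C = col_sp B"
  thus "(\<exists>Z \<in> carrier_mat n n. C = B * Z) \<and> (\<exists>Z \<in> carrier_mat n n. B = C * Z)"
    using cs_sub[OF C B] cs_sub[OF B C] by auto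
next
  assume "(\<exists>Z \<in> carrier_mat n n. C = B * Z) \<and> (\<exists>Z \<in> carrier_mat n n. B = C * Z)"
  then obtain Z1 Z2 where Z: "Z1 \<in> carrier_mat n n" "C = B * Z1" "Z2 \<in> carrier_mat n n" "B = C * Z2" by auto
  have "col_sp C \<subseteq> col_sp B" unfolding Z(2) by (rule cs_mult[OF B Z(1)])
  moreover have "col_sp B \<subseteq> col_sp C" unfolding Z(4) by (rule cs_mult[OF C Z(3)])
  ultimately show "col_sp C = col_sp B" by (rule subset_antisym)
qed

lemma cs_eqI: assumes C: "C \<in> carrier_mat n n" and B: "B \<in> carrier_mat n n"
  and Z1: "Z1 \<in> carrier_mat n n" "C = B * Z1" and Z2: "Z2 \<in> carrier_mat n n" "B = C * Z2"
  shows "col_sp C = col_sp (B :: complex mat)"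
  using cs_eq_iff[OF C B] Z1 Z2 by blast

lemma index_prop: assumes A: "A \<in> carrier_mat n n"
  shows "col_sp (A ^\<^sub>m mat_index A) = col_sp (A ^\<^sub>m (mat_index A + 1))"
proof -
  obtain N Y where Y: "Y \<in> carrier_mat n n" "A ^\<^sub>m N = A ^\<^sub>m Suc N * Y"
    using stab_exists[OF A] by auto
  have "col_sp (A ^\<^sub>m N) = col_sp (A ^\<^sub>m (N + 1))"
  proof (rule cs_eqI[OF _ _ Y(1)])
    show "A ^\<^sub>m N = A ^\<^sub>m (N + 1) * Y" using Y(2) by simp
    show "A ^\<^sub>m (N + 1) = A ^\<^sub>m N * A" by (simp add: pow_mat.simps(2))
  qed (insert A, auto)
  thus ?thesis unfolding mat_index_def by (rule LeastI)
qed

lemma index_col: assumes A: "A \<in> carrier_mat n n"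
  shows "\<exists>Z \<in> carrier_mat n n. A ^\<^sub>m mat_index A = A ^\<^sub>m Suc (mat_index A) * Z"
  using index_prop[OF A] cs_eq_iff[of "A ^\<^sub>m mat_index A" "A ^\<^sub>m Suc (mat_index A)"] A by auto

lemma index_col_ge: assumes A: "A \<in> carrier_mat n n" and j: "mat_index A \<le> j"
  shows "\<exists>Z \<in> carrier_mat n n. A ^\<^sub>m mat_index A = A ^\<^sub>m j * Z"
proof -
  let ?k = "mat_index A"
  obtain Z0 where Z0: "Z0 \<in> carrier_mat n n" "A ^\<^sub>m ?k = A ^\<^sub>m Suc ?k * Z0"
    using index_col[OF A] by auto
  have "\<exists>Z \<in> carrier_mat n n. A ^\<^sub>m ?k = A ^\<^sub>m (?k + d) * Z" for d
  proof (induct d)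
    case 0 show ?case using A by (intro bexI[of _ "1\<^sub>m n"], auto)
  next
    case (Suc d)
    then obtain Z where Z: "Z \<in> carrier_mat n n" "A ^\<^sub>m ?k = A ^\<^sub>m (?k + d) * Z" by auto
    have "A ^\<^sub>m (?k + d) = A ^\<^sub>m Suc (?k + d) * Z0" by (rule stab_extend[OF A Z0])
    hence "A ^\<^sub>m ?k = A ^\<^sub>m (?k + Suc d) * (Z0 * Z)" using Z Z0 A by simp
    thus ?case using Z Z0 by (intro bexI[of _ "Z0 * Z"], auto)
  qed
  from this[of "j - ?k"] j show ?thesis by simp
qed

lemma index_col_sp_ge: assumes A: "A \<in> carrier_mat n n" and j: "mat_index A \<le> j"
  shows "col_sp (A ^\<^sub>m j) = col_sp (A ^\<^sub>m mat_index A)"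
proof -
  obtain Z where Z: "Z \<in> carrier_mat n n" "A ^\<^sub>m mat_index A = A ^\<^sub>m j * Z"
    using index_col_ge[OF A j] by auto
  have "A ^\<^sub>m j = A ^\<^sub>m mat_index A * A ^\<^sub>m (j - mat_index A)"
    using pow_mat_add[OF A, of "mat_index A" "j - mat_index A"] j by simp
  thus ?thesis using cs_eqI[OF _ _ _ _ Z] A by auto
qed

lemma index_row: assumes A: "A \<in> carrier_mat n n"
  shows "\<exists>W \<in> carrier_mat n n. A ^\<^sub>m mat_index A = W * A ^\<^sub>m Suc (mat_index A)"
proof -
  let ?k = "mat_index A"
  have aA: "adj A \<in> carrier_mat n n" using A by simp
  obtain N Y where Y: "Y \<in> carrier_mat n n" "adj A ^\<^sub>m N = adj A ^\<^sub>m Suc N * Y"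
    using stab_exists[OF aA] by auto
  have e: "A ^\<^sub>m N = adj Y * A ^\<^sub>m Suc N"
    using arg_cong[OF Y(2), of adj] Y(1) A adj_pow[OF aA] by (simp add: adj_mult[of _ n n _ n])
  have e2: "A ^\<^sub>m (N + d) = adj Y * A ^\<^sub>m Suc (N + d)" for d
  proof -
    have "A ^\<^sub>m (N + d) = A ^\<^sub>m N * A ^\<^sub>m d" by (rule pow_mat_add[OF A])
    also have "\<dots> = adj Y * (A ^\<^sub>m Suc N * A ^\<^sub>m d)" unfolding e using A Y by simp
    also have "A ^\<^sub>m Suc N * A ^\<^sub>m d = A ^\<^sub>m Suc (N + d)" using pow_mat_add[OF A, of "Suc N" d] by simp
    finally show ?thesis .
  qed
  define M where "M = N + ?k"
  obtain Z where Z: "Z \<in> carrier_mat n n" "A ^\<^sub>m ?k = A ^\<^sub>m M * Z"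
    using index_col_ge[OF A, of M] unfolding M_def by auto
  have "A ^\<^sub>m Suc ?k = A * A ^\<^sub>m ?k" by (rule pow_mat_Suc_left[OF A])
  also have "\<dots> = A ^\<^sub>m Suc M * Z" unfolding Z(2) pow_mat_Suc_left[OF A, of M] using A Z by simp
  finally have s: "A ^\<^sub>m Suc ?k = A ^\<^sub>m Suc M * Z" .
  have "A ^\<^sub>m ?k = adj Y * A ^\<^sub>m Suc M * Z" unfolding Z(2) using e2[of ?k] unfolding M_def by simp
  also have "\<dots> = adj Y * A ^\<^sub>m Suc ?k" unfolding s using A Y Z by simp
  finally show ?thesis using Y(1) by auto
qed

definition isCEP :: "complex mat \<Rightarrow> complex mat \<Rightarrow> bool" where
  "isCEP A X = (X \<in> carrier_mat n n \<and> X * A * X = X \<and>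
      col_sp X = col_sp (A ^\<^sub>m mat_index A) \<and> col_sp (adj X) = col_sp (A ^\<^sub>m mat_index A))"

lemma CEP_exists: assumes A: "A \<in> carrier_mat n n" shows "\<exists>X. isCEP A X"
proof -
  let ?k = "mat_index A"
  define B where "B = A ^\<^sub>m ?k"
  define C where "C = A ^\<^sub>m Suc ?k"
  define M where "M = MP_inv C"
  have B: "B \<in> carrier_mat n n" and C: "C \<in> carrier_mat n n" unfolding B_def C_def using A by auto
  have AB: "A * B = C" unfolding B_def C_def by (rule pow_mat_Suc_left[OF A, symmetric])
  have BA: "B * A = C" unfolding B_def C_def by (simp add: pow_mat.simps(2))
  from MP_inv_props[OF C] have M: "M \<in> carrier_mat n n" and m: "C * M * C = C" "M * C * M = M"
    "adj (C * M) = C * M" "adj (M * C) = M * C" unfolding isMP_def M_def by auto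
  obtain Zc where Zc: "Zc \<in> carrier_mat n n" "B = C * Zc" using index_col[OF A] unfolding B_def C_def by auto
  obtain W where W: "W \<in> carrier_mat n n" "B = W * C" using index_row[OF A] unfolding B_def C_def by auto
  define X where "X = B * M"
  have X: "X \<in> carrier_mat n n" unfolding X_def using B M by simp
  have "X * A * X = B * (M * (A * B) * M)" unfolding X_def using A B M by simp
  also have "\<dots> = X" unfolding AB m X_def ..
  finally have XAX: "X * A * X = X" .
  have BXC: "B = X * C"
  proof -
    have "X * C = W * (C * M * C)" unfolding X_def W(2) using W C M by simp
    thus ?thesis unfolding m W(2)[symmetric] by simp
  qed
  have cs1: "col_sp X = col_sp B" by (rule cs_eqI[OF X B M X_def C BXC])
  have "M = M * adj (C * M)" using m(2) m(3) C M by simp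
  hence "adj M = adj (M * adj (C * M))" by simp
  also have "\<dots> = C * (M * adj M)" using C M by simp
  also have "C * (M * adj M) = B * (A * (M * adj M))" unfolding BA[symmetric] using A B M by simp
  finally have aM: "adj M = B * (A * (M * adj M))" .
  have "adj X = adj M * adj B" unfolding X_def using B M by simp
  also have "\<dots> = (B * (A * (M * adj M))) * adj B" by (rule arg_cong[OF aM, where f = "\<lambda>Z. Z * adj B"])
  also have "\<dots> = B * (A * (M * (adj M * adj B)))" using A B M by simp
  finally have aX: "adj X = B * (A * (M * (adj M * adj B)))" .
  have "adj X * (adj A * B) = adj (A * X) * B" using A X B by simp
  also have "A * X = C * M" unfolding X_def using A B M AB[symmetric] by simp
  also have "adj (C * M) * B = C * M * C * Zc" unfolding m(3) Zc(2) using C M Zc by simp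
  also have "\<dots> = B" unfolding m Zc(2) ..
  finally have BaX: "B = adj X * (adj A * B)" by simp
  have cs2: "col_sp (adj X) = col_sp B"
    by (rule cs_eqI[OF _ B _ aX _ BaX], insert A B M X, auto)
  show ?thesis unfolding isCEP_def using X XAX cs1 cs2 unfolding B_def by blast
qed

lemma CEP_unique: assumes A: "A \<in> carrier_mat n n" and 1: "isCEP A X1" and 2: "isCEP A X2"
  shows "X1 = X2"
proof -
  from 1 have X1: "X1 \<in> carrier_mat n n" and a1: "X1 * A * X1 = X1"
    and c1: "col_sp X1 = col_sp (A ^\<^sub>m mat_index A)" and r1: "col_sp (adj X1) = col_sp (A ^\<^sub>m mat_index A)"
    unfolding isCEP_def by auto
  from 2 have X2: "X2 \<in> carrier_mat n n" and a2: "X2 * A * X2 = X2"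
    and c2: "col_sp X2 = col_sp (A ^\<^sub>m mat_index A)" and r2: "col_sp (adj X2) = col_sp (A ^\<^sub>m mat_index A)"
    unfolding isCEP_def by auto
  obtain Z where Z: "Z \<in> carrier_mat n n" "X2 = X1 * Z" using cs_sub[OF X2 X1] c1 c2 by auto
  obtain Z' where Z': "Z' \<in> carrier_mat n n" "X1 = X2 * Z'" using cs_sub[OF X1 X2] c1 c2 by auto
  obtain V where V: "V \<in> carrier_mat n n" "adj X2 = adj X1 * V" using cs_sub[of "adj X2" "adj X1"] X1 X2 r1 r2 by auto
  have "X2 = adj (adj X2)" by simp
  also have "\<dots> = adj (adj X1 * V)" unfolding V(2) ..
  also have "\<dots> = adj V * X1" using V X1 by simp
  finally have V': "X2 = adj V * X1" .
  have "X1 * A * X2 = X1 * A * X1 * Z" unfolding Z(2) using X1 A Z by simp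
  hence e1: "X1 * A * X2 = X2" unfolding a1 Z(2)[symmetric] .
  have "X2 * A * X1 = X2 * A * X2 * Z'" unfolding Z'(2) using X2 A Z' by simp
  hence e2: "X2 * A * X1 = X1" unfolding a2 Z'(2)[symmetric] .
  have "X2 * A * X1 = adj V * (X1 * A * X1)" unfolding V' using V X1 A by simp
  hence "X2 * A * X1 = X2" unfolding a1 V'[symmetric] .
  with e2 show ?thesis by simp
qed

lemma core_EP_props: assumes A: "A \<in> carrier_mat n n" shows "isCEP A (core_EP A)"
proof -
  obtain X where X: "isCEP A X" using CEP_exists[OF A] by auto
  have ex: "\<exists>!X. X \<in> carrier_mat (dim_row A) (dim_row A) \<and> X * A * X = X \<and>
      col_sp X = col_sp (A ^\<^sub>m mat_index A) \<and> col_sp (mat_adjoint X) = col_sp (A ^\<^sub>m mat_index A)"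
  proof (rule ex1I[of _ X])
    show "X \<in> carrier_mat (dim_row A) (dim_row A) \<and> X * A * X = X \<and>
      col_sp X = col_sp (A ^\<^sub>m mat_index A) \<and> col_sp (mat_adjoint X) = col_sp (A ^\<^sub>m mat_index A)"
      using X A unfolding isCEP_def by auto
  next
    fix Y assume "Y \<in> carrier_mat (dim_row A) (dim_row A) \<and> Y * A * Y = Y \<and>
      col_sp Y = col_sp (A ^\<^sub>m mat_index A) \<and> col_sp (mat_adjoint Y) = col_sp (A ^\<^sub>m mat_index A)"
    hence "isCEP A Y" using A unfolding isCEP_def by auto
    thus "Y = X" using CEP_unique[OF A X] by simp
  qed
  show ?thesis using theI'[OF ex] A unfolding core_EP_def isCEP_def by auto
qed

lemma core_EP_eq: assumes A: "A \<in> carrier_mat n n" and X: "isCEP A X" shows "core_EP A = X"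
  using CEP_unique[OF A core_EP_props[OF A] X] .

end

context sqm begin

lemma mwc_core: assumes A: "A \<in> carrier_mat n n" and m: "mat_index A \<le> m"
  shows "m_weak_core_inv m A = core_EP A"
proof -
  let ?k = "mat_index A"
  define X where "X = core_EP A"
  from core_EP_props[OF A] have X: "X \<in> carrier_mat n n" and xax: "X * A * X = X"
    and c: "col_sp X = col_sp (A ^\<^sub>m ?k)" and r: "col_sp (adj X) = col_sp (A ^\<^sub>m ?k)"
    unfolding isCEP_def X_def by auto
  have Ak: "A ^\<^sub>m j \<in> carrier_mat n n" for j using A by simp
  have Xi: "X ^\<^sub>m j \<in> carrier_mat n n" for j using X by simp
  obtain W where W: "W \<in> carrier_mat n n" "A ^\<^sub>m ?k = X * W" using cs_sub[OF Ak X] c by auto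
  have XAAk: "X * (A * A ^\<^sub>m ?k) = A ^\<^sub>m ?k"
  proof -
    have "X * (A * A ^\<^sub>m ?k) = X * A * X * W" unfolding W(2) using X A W by simp
    thus ?thesis unfolding xax W(2)[symmetric] .
  qed
  have step: "X * A ^\<^sub>m Suc j = A ^\<^sub>m j" if j: "?k \<le> j" for j
  proof -
    have "A ^\<^sub>m j = A ^\<^sub>m ?k * A ^\<^sub>m (j - ?k)" using pow_mat_add[OF A, of ?k "j - ?k"] j by simp
    hence "X * A ^\<^sub>m Suc j = X * (A * A ^\<^sub>m ?k) * A ^\<^sub>m (j - ?k)"
      unfolding pow_mat_Suc_left[OF A] using X A Ak by simp
    also have "\<dots> = A ^\<^sub>m j" unfolding XAAk using pow_mat_add[OF A, of ?k "j - ?k"] j by simp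
    finally show ?thesis .
  qed
  have iter: "X ^\<^sub>m i * A ^\<^sub>m (m + i) = A ^\<^sub>m m" for i
  proof (induct i)
    case 0 then show ?case using A X by simp
  next
    case (Suc i)
    have "X ^\<^sub>m Suc i * A ^\<^sub>m (m + Suc i) = X ^\<^sub>m i * (X * A ^\<^sub>m Suc (m + i))"
      using Xi X Ak A by (simp add: pow_mat.simps(2))
    also have "X * A ^\<^sub>m Suc (m + i) = A ^\<^sub>m (m + i)" using step[of "m + i"] m by simp
    also have "X ^\<^sub>m i * A ^\<^sub>m (m + i) = A ^\<^sub>m m" by (rule Suc)
    finally show ?case .
  qed
  define Mm where "Mm = MP_inv (A ^\<^sub>m m)"
  from MP_inv_props[OF Ak] have Mm: "Mm \<in> carrier_mat n n" and mp: "A ^\<^sub>m m * Mm * A ^\<^sub>m m = A ^\<^sub>m m"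
    "adj (A ^\<^sub>m m * Mm) = A ^\<^sub>m m * Mm" unfolding isMP_def Mm_def by auto
  have "m_weak_core_inv m A = X ^\<^sub>m Suc m * A ^\<^sub>m m * (A ^\<^sub>m m * Mm)"
    unfolding m_weak_core_inv_def m_WG_inv_def proj_mat_def X_def Mm_def by simp
  also have "\<dots> = X * (X ^\<^sub>m m * (A ^\<^sub>m m * A ^\<^sub>m m)) * Mm"
    unfolding pow_mat_Suc_left[OF X] using X Xi Ak Mm by simp
  also have "A ^\<^sub>m m * A ^\<^sub>m m = A ^\<^sub>m (m + m)" using pow_mat_add[OF A] by simp
  also have "X ^\<^sub>m m * A ^\<^sub>m (m + m) = A ^\<^sub>m m" by (rule iter)
  finally have e1: "m_weak_core_inv m A = X * A ^\<^sub>m m * Mm" using X Ak Mm by simp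
  have "col_sp (adj X) = col_sp (A ^\<^sub>m m)" unfolding r using index_col_sp_ge[OF A m] by simp
  then obtain Z where Z: "Z \<in> carrier_mat n n" "adj X = A ^\<^sub>m m * Z" using cs_sub[of "adj X" "A ^\<^sub>m m"] X Ak by auto
  have "X = adj (adj X)" by simp
  also have "\<dots> = adj (A ^\<^sub>m m * Z)" unfolding Z(2) ..
  also have "\<dots> = adj Z * adj (A ^\<^sub>m m)" using Z Ak by simp
  finally have XZ: "X = adj Z * adj (A ^\<^sub>m m)" .
  have "X * A ^\<^sub>m m * Mm = adj Z * (adj (A ^\<^sub>m m) * adj (A ^\<^sub>m m * Mm))"
    unfolding XZ mp(2) using Z Ak Mm by simp
  also have "\<dots> = adj Z * adj (A ^\<^sub>m m * Mm * A ^\<^sub>m m)" using Z Ak Mm by simp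
  also have "\<dots> = X" unfolding mp(1) XZ ..
  finally show ?thesis unfolding e1 X_def .
qed

lemma mwc_one: assumes A: "A \<in> carrier_mat n n"
  shows "m_weak_core_inv 1 A = WC_inv A"
proof -
  have "A ^\<^sub>m 1 = A" using A by (simp add: pow_mat.simps(2))
  thus ?thesis unfolding m_weak_core_inv_def m_WG_inv_def WC_inv_def WG_inv_def
    by (simp add: numeral_2_eq_2)
qed

end

definition up :: "nat \<Rightarrow> complex mat \<Rightarrow> complex mat \<Rightarrow> complex mat" where
  "up p A B = four_block_mat A B (0\<^sub>m p (dim_row A)) (0\<^sub>m p p)"

definition Fb :: "nat \<Rightarrow> complex mat \<Rightarrow> complex mat" where
  "Fb p Y = up p Y (0\<^sub>m (dim_row Y) p)"

lemma up_carrier[simp]: "A \<in> carrier_mat r r \<Longrightarrow> B \<in> carrier_mat r p \<Longrightarrow> up p A B \<in> carrier_mat (r + p) (r + p)"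
  unfolding up_def by auto

lemma Fb_carrier[simp]: "A \<in> carrier_mat r r \<Longrightarrow> Fb p A \<in> carrier_mat (r + p) (r + p)"
  unfolding Fb_def by (auto dest: carrier_matD)

lemma up_mult: assumes "A1 \<in> carrier_mat r r" "B1 \<in> carrier_mat r p" "A2 \<in> carrier_mat r r" "B2 \<in> carrier_mat r p"
  shows "up p A1 B1 * up p A2 B2 = up p (A1 * A2) (A1 * B2)"
proof -
  have "up p A1 B1 * up p A2 B2 = four_block_mat (A1 * A2 + B1 * 0\<^sub>m p r) (A1 * B2 + B1 * 0\<^sub>m p p)
     (0\<^sub>m p r * A2 + 0\<^sub>m p p * 0\<^sub>m p r) (0\<^sub>m p r * B2 + 0\<^sub>m p p * 0\<^sub>m p p)"
    unfolding up_def using assms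
    by (subst mult_four_block_mat[of _ r r _ p _ p _ _ r _ p], auto dest: carrier_matD)
  also have "\<dots> = up p (A1 * A2) (A1 * B2)" unfolding up_def using assms by (auto dest: carrier_matD)
  finally show ?thesis .
qed

lemma adj_Fb: assumes A: "A \<in> carrier_mat r r" shows "adj (Fb p A) = Fb p (adj A)"
  unfolding Fb_def up_def using adj_four_block[OF A zero_carrier_mat zero_carrier_mat zero_carrier_mat, of p] A
  by (auto dest: carrier_matD)

lemma Fb_up: "Y \<in> carrier_mat r r \<Longrightarrow> A \<in> carrier_mat r r \<Longrightarrow> B \<in> carrier_mat r p \<Longrightarrow>
  Fb p Y * up p A B = up p (Y * A) (Y * B)"
  unfolding Fb_def by (subst up_mult, auto dest: carrier_matD)

lemma up_Fb: "Y \<in> carrier_mat r r \<Longrightarrow> A \<in> carrier_mat r r \<Longrightarrow> B \<in> carrier_mat r p \<Longrightarrow>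
  up p A B * Fb p Y = Fb p (A * Y)"
  unfolding Fb_def by (subst up_mult, auto dest: carrier_matD)

lemma Fb_Fb: "Y \<in> carrier_mat r r \<Longrightarrow> Z \<in> carrier_mat r r \<Longrightarrow> Fb p Y * Fb p Z = Fb p (Y * Z)"
  using up_Fb[where Y=Z and A=Y and B="0\<^sub>m r p" and r=r and p=p] unfolding Fb_def by (auto dest: carrier_matD)

lemma cs_Fb: assumes Y: "Y \<in> carrier_mat r r" and B: "B \<in> carrier_mat r r"
  and c: "col_sp Y = col_sp B"
  shows "col_sp (Fb p Y) = col_sp (Fb p B)"
proof -
  obtain Z1 Z2 where Z: "Z1 \<in> carrier_mat r r" "Y = B * Z1" "Z2 \<in> carrier_mat r r" "B = Y * Z2"
    using sqm.cs_eq_iff[OF Y B] c by auto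
  show ?thesis
  proof (rule sqm.cs_eqI[OF Fb_carrier[OF Y] Fb_carrier[OF B] Fb_carrier[OF Z(1)] _ Fb_carrier[OF Z(3)]])
    show "Fb p Y = Fb p B * Fb p Z1" unfolding Fb_Fb[OF B Z(1)] Z(2) ..
    show "Fb p B = Fb p Y * Fb p Z2" unfolding Fb_Fb[OF Y Z(3)] Z(4)[symmetric] ..
  qed
qed

lemma cs_U: assumes U: "U \<in> carrier_mat n n" "adj U * U = 1\<^sub>m n"
  and C: "C \<in> carrier_mat n n" and B: "B \<in> carrier_mat n n" and c: "col_sp C = col_sp B"
  shows "col_sp (U * C * adj U) = col_sp (U * B * adj U)"
proof -
  interpret sqm n .
  obtain W1 W2 where Z: "W1 \<in> carrier_mat n n" "C = B * W1" "W2 \<in> carrier_mat n n" "B = C * W2"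
    using cs_eq_iff[OF C B] c by auto
  have aU: "adj U \<in> carrier_mat n n" using U by simp
  have e: "adj U * (U * X) = X" if "X \<in> carrier_mat n n" for X
    using U(2) that U aU by (simp add: assoc_mult_mat[of "adj U" n n U n X n, symmetric])
  show ?thesis
  proof (rule cs_eqI[of "U * C * adj U" "U * B * adj U" "U * W1 * adj U" "U * W2 * adj U"])
    show "U * C * adj U = U * B * adj U * (U * W1 * adj U)"
      unfolding Z(2) using U aU B Z(1) e[of "W1 * adj U"] by simp
    show "U * B * adj U = U * C * adj U * (U * W2 * adj U)"
      unfolding Z(4) using U aU C Z(3) e[of "W2 * adj U"] by simp
  qed (insert U aU B C Z(1) Z(3), auto)
qed

lemma up_adj_mult: assumes K: "K \<in> carrier_mat r r" and L: "L \<in> carrier_mat r p"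
  shows "up p K L * adj (up p K L) = Fb p (K * adj K + L * adj L)"
proof -
  have a: "adj (up p K L) = four_block_mat (adj K) (0\<^sub>m r p) (adj L) (0\<^sub>m p p)"
    unfolding up_def using adj_four_block[OF K L zero_carrier_mat zero_carrier_mat, of p] K by (auto dest: carrier_matD)
  have "up p K L * adj (up p K L) = four_block_mat (K * adj K + L * adj L) (K * 0\<^sub>m r p + L * 0\<^sub>m p p)
    (0\<^sub>m p r * adj K + 0\<^sub>m p p * adj L) (0\<^sub>m p r * 0\<^sub>m r p + 0\<^sub>m p p * 0\<^sub>m p p)"
    unfolding a unfolding up_def using K L
    by (subst mult_four_block_mat[of _ r r _ p _ p _ _ r _ p], auto dest: carrier_matD)
  also have "\<dots> = Fb p (K * adj K + L * adj L)" unfolding Fb_def up_def using K L by (auto dest: carrier_matD)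
  finally show ?thesis .
qed

lemma HS_main:
  fixes U S Sinv K L A :: "complex mat" and r p :: nat
  assumes U: "U \<in> carrier_mat (r + p) (r + p)" "U * adj U = 1\<^sub>m (r + p)" "adj U * U = 1\<^sub>m (r + p)"
    and S: "S \<in> carrier_mat r r" "Sinv \<in> carrier_mat r r" "S * Sinv = 1\<^sub>m r"
    and K: "K \<in> carrier_mat r r" and L: "L \<in> carrier_mat r p" and KL: "K * adj K + L * adj L = 1\<^sub>m r"
    and HS: "A = U * up p (S * K) (S * L) * adj U"
  shows "core_EP A = U * Fb p (core_EP (S * K)) * adj U"
    "WC_inv A = U * Fb p (WG_inv (S * K)) * adj U"
proof -
  define N where "N = r + p"
  interpret sqm N .
  interpret R: sqm r .
  have U': "U \<in> carrier_mat N N" using U unfolding N_def by simp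
  have aU: "adj U \<in> carrier_mat N N" using U' by simp
  define T where "T = S * K"
  define Sg where "Sg = S * L"
  have T: "T \<in> carrier_mat r r" unfolding T_def using S K by simp
  have Sg: "Sg \<in> carrier_mat r p" unfolding Sg_def using S L by simp
  define Mb where "Mb = up p T Sg"
  have Mb: "Mb \<in> carrier_mat N N" unfolding Mb_def N_def using T Sg by simp
  have Fbc: "Y \<in> carrier_mat r r \<Longrightarrow> Fb p Y \<in> carrier_mat N N" for Y unfolding N_def by simp
  define E where "E = Fb p (1\<^sub>m r)"
  have E: "E \<in> carrier_mat N N" unfolding E_def using Fbc by simp
  define G where "G = up p K L"
  have G: "G \<in> carrier_mat N N" unfolding G_def N_def using K L by simp
  define Q where "Q = adj G * Fb p Sinv"
  have Q: "Q \<in> carrier_mat N N" unfolding Q_def using G Fbc S by simp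
  have A: "A \<in> carrier_mat N N" unfolding HS using U' Mb aU unfolding Mb_def T_def Sg_def by simp
  have AU: "A = U * Mb * adj U" unfolding HS Mb_def T_def Sg_def ..
  have eU: "adj U * (U * Z) = Z" if "Z \<in> carrier_mat N N" for Z
    using U(3) that U' aU unfolding N_def[symmetric]
    by (simp add: assoc_mult_mat[of "adj U" N N U N Z N, symmetric])
  have f1: "Mb = Fb p S * G" unfolding Mb_def G_def T_def Sg_def using Fb_up[OF S(1) K L] ..
  have f2: "G * adj G = E" unfolding G_def E_def up_adj_mult[OF K L] KL ..
  have f3: "Mb * Q = E"
  proof -
    have "Mb * Q = Fb p S * ((G * adj G) * Fb p Sinv)" unfolding f1 Q_def using S G Fbc by simp
    also have "\<dots> = Fb p (S * 1\<^sub>m r * Sinv)" unfolding f2 E_def using S by (simp add: Fb_Fb[of _ r])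
    finally show ?thesis unfolding E_def using S by simp
  qed
  have f4: "E * Mb = Mb" unfolding E_def Mb_def using Fb_up[OF one_carrier_mat T Sg] T Sg by simp
  have f5: "Mb * E = Fb p T" unfolding E_def Mb_def using up_Fb[OF one_carrier_mat T Sg] T by simp
  have f6: "Mb * Fb p Y = Fb p (T * Y)" if "Y \<in> carrier_mat r r" for Y
    unfolding Mb_def using up_Fb[OF that T Sg] .
  have powA: "A ^\<^sub>m j = U * Mb ^\<^sub>m j * adj U" for j
  proof (induct j)
    case 0 show ?case using U U(2) N_def A Mb by simp
  next
    case (Suc j)
    have "A ^\<^sub>m Suc j = A ^\<^sub>m j * A" by (simp add: pow_mat.simps(2))
    also have "A ^\<^sub>m j = U * Mb ^\<^sub>m j * adj U" by (rule Suc)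
    also have "U * Mb ^\<^sub>m j * adj U * A = U * Mb ^\<^sub>m j * adj U * (U * Mb * adj U)" by (simp only: AU)
    also have "\<dots> = U * Mb ^\<^sub>m Suc j * adj U" using U' aU Mb eU by (simp add: pow_mat.simps(2))
    finally show ?case .
  qed
  have powMb: "Mb ^\<^sub>m Suc j = Fb p (T ^\<^sub>m j) * Mb" for j
  proof (induct j)
    case 0 show ?case using f4 Mb T unfolding E_def by (simp add: pow_mat.simps(2))
  next
    case (Suc j)
    have "Mb ^\<^sub>m Suc (Suc j) = (Mb * Fb p (T ^\<^sub>m j)) * Mb"
      unfolding pow_mat_Suc_left[OF Mb, of "Suc j"] Suc using Mb Fbc T by simp
    also have "\<dots> = Fb p (T ^\<^sub>m Suc j) * Mb" unfolding f6[OF pow_carrier_mat[OF T]]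
      pow_mat_Suc_left[OF T] ..
    finally show ?case .
  qed
  have csMb: "col_sp (Mb ^\<^sub>m Suc j) = col_sp (Fb p (T ^\<^sub>m j))" for j
  proof (rule cs_eqI[OF _ _ Mb _ Q])
    show "Mb ^\<^sub>m Suc j = Fb p (T ^\<^sub>m j) * Mb" by (rule powMb)
    have "Mb ^\<^sub>m Suc j * Q = Fb p (T ^\<^sub>m j) * (Mb * Q)" unfolding powMb using Mb Q Fbc T by simp
    also have "\<dots> = Fb p (T ^\<^sub>m j)" unfolding f3 E_def using T by (simp add: Fb_Fb[of _ r])
    finally show "Fb p (T ^\<^sub>m j) = Mb ^\<^sub>m Suc j * Q" by simp
  qed (insert Mb Fbc T, auto)
  define Y where "Y = core_EP T"
  from R.core_EP_props[OF T] have Y: "Y \<in> carrier_mat r r" and yty: "Y * T * Y = Y"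
    and cY: "col_sp Y = col_sp (T ^\<^sub>m mat_index T)" and rY: "col_sp (adj Y) = col_sp (T ^\<^sub>m mat_index T)"
    unfolding R.isCEP_def Y_def by auto
  define X where "X = U * Fb p Y * adj U"
  have X: "X \<in> carrier_mat N N" unfolding X_def using U' aU Fbc Y by simp
  define j where "j = max (mat_index A) (mat_index T)"
  have cTj: "col_sp (T ^\<^sub>m mat_index T) = col_sp (T ^\<^sub>m j)"
    using R.index_col_sp_ge[OF T, of j] unfolding j_def by simp
  have cAj: "col_sp (A ^\<^sub>m mat_index A) = col_sp (U * Fb p (T ^\<^sub>m j) * adj U)"
  proof -
    have "col_sp (A ^\<^sub>m mat_index A) = col_sp (A ^\<^sub>m Suc j)"
      using index_col_sp_ge[OF A, of "Suc j"] unfolding j_def by simp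
    also have "\<dots> = col_sp (U * Mb ^\<^sub>m Suc j * adj U)" unfolding powA ..
    also have "\<dots> = col_sp (U * Fb p (T ^\<^sub>m j) * adj U)"
      by (rule cs_U[OF U' U(3)[folded N_def] _ _ csMb], insert Mb Fbc T, auto)
    finally show ?thesis .
  qed
  have XAX: "X * A * X = X"
  proof -
    have g: "Fb p Y * (Mb * (Fb p Y * W)) = Fb p Y * W" if W: "W \<in> carrier_mat N N" for W
    proof -
      have "Fb p Y * (Mb * (Fb p Y * W)) = (Fb p Y * (Mb * Fb p Y)) * W" using Fbc Y Mb W by simp
      also have "Fb p Y * (Mb * Fb p Y) = Fb p (Y * T * Y)"
        unfolding f6[OF Y] using Y T by (simp add: Fb_Fb[of _ r])
      finally show ?thesis unfolding yty .
    qed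
    show ?thesis unfolding X_def AU using U' aU Mb Fbc Y eU g by simp
  qed
  have Tj: "T ^\<^sub>m j \<in> carrier_mat r r" using T by simp
  have aY: "adj Y \<in> carrier_mat r r" using Y by simp
  have cFY: "col_sp (Fb p Y) = col_sp (Fb p (T ^\<^sub>m j))" by (rule cs_Fb[OF Y Tj], simp add: cY cTj)
  have rFY: "col_sp (Fb p (adj Y)) = col_sp (Fb p (T ^\<^sub>m j))" by (rule cs_Fb[OF aY Tj], simp add: rY cTj)
  have cX: "col_sp X = col_sp (A ^\<^sub>m mat_index A)"
    unfolding cAj X_def by (rule cs_U[OF U' U(3)[folded N_def] Fbc[OF Y] Fbc[OF Tj] cFY])
  have aX: "adj X = U * Fb p (adj Y) * adj U" unfolding X_def using U' Fbc Y adj_Fb[OF Y] by simp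
  have rX: "col_sp (adj X) = col_sp (A ^\<^sub>m mat_index A)"
    unfolding cAj aX by (rule cs_U[OF U' U(3)[folded N_def] Fbc[OF aY] Fbc[OF Tj] rFY])
  have cepA: "core_EP A = X"
    by (rule core_EP_eq[OF A], unfold isCEP_def, insert X XAX cX rX, auto)
  thus "core_EP A = U * Fb p (core_EP (S * K)) * adj U" unfolding X_def Y_def T_def .
  define M where "M = MP_inv A"
  from MP_inv_props[OF A] have M: "M \<in> carrier_mat N N" and m: "A * M * A = A" "adj (A * M) = A * M"
    unfolding isMP_def M_def by auto
  define P2 where "P2 = U * E * adj U"
  have AZ: "A * (U * Q * adj U) = P2"
  proof -
    have "A * (U * Q * adj U) = U * ((Mb * Q) * adj U)" unfolding AU using U' aU Mb Q eU by simp
    thus ?thesis unfolding f3 P2_def using U' aU E by simp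
  qed
  have P2A: "P2 * A = A"
  proof -
    have "P2 * A = U * ((E * Mb) * adj U)" unfolding AU P2_def using U' aU Mb E eU by simp
    thus ?thesis unfolding f4 AU using U' aU Mb by simp
  qed
  have aE: "adj E = E" unfolding E_def using adj_Fb[of "1\<^sub>m r" r p] by simp
  have aP2: "adj P2 = P2" unfolding P2_def using U' aU E aE by simp
  have P2c: "P2 \<in> carrier_mat N N" unfolding P2_def using U' aU E by simp
  have Zc: "U * Q * adj U \<in> carrier_mat N N" using U' aU Q by simp
  have e1: "A * M * P2 = P2"
  proof -
    have "A * M * P2 = (A * M * A) * (U * Q * adj U)" unfolding AZ[symmetric] using A M Zc by simp
    thus ?thesis unfolding m(1) AZ .
  qed
  have e2: "P2 * (A * M) = A * M" using P2A P2c A M by (simp add: assoc_mult_mat[of P2 N N A N M N, symmetric])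
  have proj: "A * M = P2"
  proof -
    have "A * M = adj (A * M)" using m(2) by simp
    also have "\<dots> = adj (P2 * (A * M))" unfolding e2 ..
    also have "\<dots> = A * M * P2" using P2c A M aP2 m(2) by simp
    finally show ?thesis unfolding e1 .
  qed
  have "WC_inv A = X * X * A * (A * M)"
    unfolding WC_inv_def WG_inv_def proj_mat_def cepA M_def using X
    by (simp add: numeral_2_eq_2 pow_mat.simps(2))
  also have "\<dots> = X * X * A * P2" unfolding proj ..
  also have "\<dots> = U * (Fb p Y * (Fb p Y * ((Mb * E) * adj U)))"
    unfolding X_def AU P2_def using U' aU Fbc Y Mb E eU by simp
  also have "\<dots> = U * ((Fb p Y * Fb p Y) * Fb p T) * adj U"
    unfolding f5 using U' aU Fbc Y T by simp
  also have "(Fb p Y * Fb p Y) * Fb p T = Fb p (Y * Y * T)"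
    unfolding Fb_Fb[OF Y Y] using Fb_Fb[of "Y * Y" r T p] Y T by simp
  also have "Y * Y * T = WG_inv T" unfolding WG_inv_def Y_def[symmetric] using Y
    by (simp add: numeral_2_eq_2 pow_mat.simps(2))
  finally show "WC_inv A = U * Fb p (WG_inv (S * K)) * adj U" unfolding T_def .
qed

lemma diag_inv: assumes S: "(S :: complex mat) \<in> carrier_mat r r" "diagonal_mat S" and nz: "\<forall>i<r. S $$ (i,i) \<noteq> 0"
  shows "\<exists>Sinv \<in> carrier_mat r r. S * Sinv = 1\<^sub>m r"
proof -
  define Sinv where "Sinv = mat r r (\<lambda>(i,j). if i = j then 1 / S $$ (i,i) else (0::complex))"
  have "S * Sinv = 1\<^sub>m r"
  proof (rule eq_matI)
    fix i j assume i: "i < dim_row (1\<^sub>m r)" and j: "j < dim_col (1\<^sub>m r)"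
    hence i: "i < r" and j: "j < r" by auto
    have "(S * Sinv) $$ (i,j) = (\<Sum>l\<in>{0..<r}. S $$ (i,l) * Sinv $$ (l,j))"
      using S i j unfolding Sinv_def by (simp add: scalar_prod_def)
    also have "\<dots> = (\<Sum>l\<in>{0..<r}. if l = i then S $$ (i,i) * Sinv $$ (i,j) else 0)"
      by (rule sum.cong, insert S(1,2) i, auto simp: diagonal_mat_def)
    also have "\<dots> = S $$ (i,i) * Sinv $$ (i,j)" using i by simp
    also have "\<dots> = 1\<^sub>m r $$ (i,j)" unfolding Sinv_def using i j nz by auto
    finally show "(S * Sinv) $$ (i,j) = 1\<^sub>m r $$ (i,j)" .
  qed (insert S, auto simp: Sinv_def)
  thus ?thesis unfolding Sinv_def by auto
qed

theorem corollary6p2: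
  fixes A U S K L :: "complex mat" and n r k :: nat
  assumes A: "A \<in> carrier_mat n n"
    and rk: "vec_space.rank n A = r" and r0: "r > 0"
    and k: "k = mat_index A"
    and U: "U \<in> carrier_mat n n" "U * mat_adjoint U = 1\<^sub>m n" "mat_adjoint U * U = 1\<^sub>m n"
    and S: "S \<in> carrier_mat r r" "diagonal_mat S"
      "\<forall>i<r. S $$ (i, i) \<in> \<real> \<and> Re (S $$ (i, i)) > 0"
      "\<forall>i j. i \<le> j \<and> j < r \<longrightarrow> Re (S $$ (j, j)) \<le> Re (S $$ (i, i))"
    and KL: "K \<in> carrier_mat r r" "L \<in> carrier_mat r (n - r)"
      "K * mat_adjoint K + L * mat_adjoint L = 1\<^sub>m r"
    and HS: "A = U * four_block_mat (S * K) (S * L) (0\<^sub>m (n - r) r) (0\<^sub>m (n - r) (n - r))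
                 * mat_adjoint U"
  shows "(m_weak_core_inv 1 A = WC_inv A \<and>
         WC_inv A = U * four_block_mat (WG_inv (S * K)) (0\<^sub>m r (n - r))
                          (0\<^sub>m (n - r) r) (0\<^sub>m (n - r) (n - r)) * mat_adjoint U) \<and>
         (\<forall>m::nat. m \<ge> 1 \<and> m \<ge> k \<longrightarrow>
         m_weak_core_inv m A = core_EP A \<and>
         core_EP A = U * four_block_mat (core_EP (S * K)) (0\<^sub>m r (n - r))
                          (0\<^sub>m (n - r) r) (0\<^sub>m (n - r) (n - r)) * mat_adjoint U)"
proof -
  have rn: "r \<le> n" using vec_space.rank_le_nc[OF A] rk by simp
  hence nn: "r + (n - r) = n" by simp
  have nz: "\<forall>i<r. S $$ (i,i) \<noteq> 0" using S(3) by force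
  obtain Sinv where Sinv: "Sinv \<in> carrier_mat r r" "S * Sinv = 1\<^sub>m r" using diag_inv[OF S(1,2) nz] by auto
  have T: "S * K \<in> carrier_mat r r" using S KL by simp
  have HS': "A = U * up (n - r) (S * K) (S * L) * adj U" unfolding HS up_def using S(1) by (simp add: carrier_matD)
  note main = HS_main[of U r "n - r", unfolded nn, OF U S(1) Sinv KL HS']
  from sqm.core_EP_props[OF T] have cT: "core_EP (S * K) \<in> carrier_mat r r" unfolding sqm.isCEP_def by auto
  have wT: "WG_inv (S * K) \<in> carrier_mat r r" unfolding WG_inv_def using mult_carrier_mat[OF pow_carrier_mat[OF cT] T] .
  have Fb1: "Fb (n - r) (core_EP (S * K)) = four_block_mat (core_EP (S * K)) (0\<^sub>m r (n - r))
                          (0\<^sub>m (n - r) r) (0\<^sub>m (n - r) (n - r))"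
    unfolding Fb_def up_def using cT by (simp add: carrier_matD)
  have Fb2: "Fb (n - r) (WG_inv (S * K)) = four_block_mat (WG_inv (S * K)) (0\<^sub>m r (n - r))
                          (0\<^sub>m (n - r) r) (0\<^sub>m (n - r) (n - r))"
    unfolding Fb_def up_def using wT by (simp add: carrier_matD)
  show ?thesis
    using main sqm.mwc_one[OF A] sqm.mwc_core[OF A] k unfolding Fb1 Fb2 by auto
qed

end
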